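(* Let $G=(V,E)$ be a finite graph and let $\underline{r}^G=(r_v)_{v\in V}\in\mathbb{Z}^{V}$. Let $H$ be an arbitrary $2$-cover of $G$, and let $G\cup G$ denote the disjoint union of two copies of $G$ (itself a $2$-cover of $G$). Let $\underline{r}$ denote the vector induced by $\underline{r}^G$ on $H$ and on $G\cup G$, i.e. each lift $u'$ of a vertex $u\in V$ gets value $r_{u'}=r_u$. Then $$\varepsilon_{\underline{r}}(G\cup G)\geq \varepsilon_{\underline{r}}(H).$$ In other words, for any $\underline{r}\in\mathbb{Z}^{V}$, among all $2$-covers $H$ of $G$ the quantity $\varepsilon_{\underline{r}}(H)$ is maximized by $G\cup G$.
   Context: A $2$-cover of $G$ is a graph with vertex set $V\times\{0,1\}$ obtained by choosing, for every edge $uv\in E$, either the pair of edges $(u,0)(v,0),(u,1)(v,1)$ or the pair $(u,0)(v,1),(u,1)(v,0)$, and having no other edges. For a graph $F$ and a vector $\underline{r}=(r_v)\in\mathbb{Z}^{V(F)}$, $\varepsilon_{\underline{r}}(F)$ denotes the number of orientations of $F$ in which every vertex $v$ has in-degree exactly $r_v$. *)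

theory Defs
  imports Main
begin

definition simple_graph :: "'a set \<Rightarrow> 'a set set \<Rightarrow> bool" where
  "simple_graph V E \<longleftrightarrow> finite V \<and> (\<forall>e\<in>E. \<exists>u v. u \<in> V \<and> v \<in> V \<and> u \<noteq> v \<and> e = {u, v})"

text \<open>An orientation of (V,E) is encoded by its head map: each edge e is sent to the endpoint
  it points to (its head); the map is extensional (undefined off E).\<close>
definition orientations :: "'a set set \<Rightarrow> ('a set \<Rightarrow> 'a) set" where
  "orientations E = {h. (\<forall>e\<in>E. h e \<in> e) \<and> (\<forall>e. e \<notin> E \<longrightarrow> h e = undefined)}"

definition indeg :: "'a set set \<Rightarrow> ('a set \<Rightarrow> 'a) \<Rightarrow> 'a \<Rightarrow> nat" where
  "indeg E h v = card {e \<in> E. h e = v}"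

definition eps :: "'a set \<Rightarrow> 'a set set \<Rightarrow> ('a \<Rightarrow> int) \<Rightarrow> nat" where
  "eps V E r = card {h \<in> orientations E. \<forall>v\<in>V. int (indeg E h v) = r v}"

text \<open>Edges of the 2-cover determined by the choice s: s e = False picks
  (u,0)(v,0),(u,1)(v,1); s e = True picks (u,0)(v,1),(u,1)(v,0). Layers {0,1} are encoded by bool.\<close>
definition cover_edges :: "'a set set \<Rightarrow> ('a set \<Rightarrow> bool) \<Rightarrow> ('a \<times> bool) set set" where
  "cover_edges E s = {{(u, i), (v, j)} | u v i j. {u, v} \<in> E \<and> ((i \<noteq> j) = s {u, v})}"

definition is_two_cover :: "'a set set \<Rightarrow> ('a \<times> bool) set set \<Rightarrow> bool" where
  "is_two_cover E EH \<longleftrightarrow> (\<exists>s. EH = cover_edges E s)"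

definition double_edges :: "'a set set \<Rightarrow> ('a \<times> bool) set set" where
  "double_edges E = cover_edges E (\<lambda>_. False)"

definition lift_vec :: "('a \<Rightarrow> int) \<Rightarrow> ('a \<times> bool) \<Rightarrow> int" where
  "lift_vec r x = r (fst x)"

end

theory Submission
  imports Defs "HOL-Library.FuncSet" Complex_Main
begin

definition ang :: "nat \<Rightarrow> nat \<Rightarrow> real" where "ang K j = 2 * pi * real j / real K"

lemma roots_sum:
  fixes K :: nat and n :: int
  assumes K: "K > 0" and n: "\<bar>n\<bar> < int K"
  shows "(\<Sum>j<K. cis (ang K j * of_int n)) = (if n = 0 then of_nat K else 0)"
proof (cases "n = 0")
  case True then show ?thesis by simp
next
  case False
  define w where "w = cis (2 * pi * of_int n / real K)"
  have w1: "w \<noteq> 1"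
  proof
    assume "w = 1"
    then have "cos (2 * pi * of_int n / real K) = 1" unfolding w_def by (simp add: complex_eq_iff)
    then obtain k :: int where k: "2 * pi * of_int n / real K = real_of_int k * 2 * pi"
      by (subst (asm) cos_one_2pi_int) blast
    then have "real_of_int n = real_of_int (k * int K)" using K by (simp add: field_simps)
    then have nk: "n = k * int K" by linarith
    then have "\<bar>n\<bar> = \<bar>k\<bar> * int K" by (simp add: abs_mult)
    moreover have "\<bar>k\<bar> \<ge> 1" using False nk by auto
    then have "\<bar>k\<bar> * int K \<ge> 1 * int K" by (intro mult_right_mono) auto
    ultimately show False using n by simp
  qed
  have "(\<Sum>j<K. cis (ang K j * of_int n)) = (\<Sum>j<K. w ^ j)"
    by (intro sum.cong refl) (simp add: ang_def w_def DeMoivre mult_ac)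
  also have "\<dots> = (w ^ K - 1) / (w - 1)" using w1 by (subst geometric_sum) auto
  also have "w ^ K = cis (2 * pi * of_int n)" using K by (simp add: w_def DeMoivre)
  also have "\<dots> = 1" by (metis Ints_of_int cis_multiple_2pi)
  finally show ?thesis using False by simp
qed

lemma prod_cis: "finite A \<Longrightarrow> (\<Prod>x\<in>A. cis (f x)) = cis (\<Sum>x\<in>A. f x)"
  by (induction A rule: finite_induct) (auto simp: cis_mult)

lemma prod_indicator:
  assumes "finite T"
  shows "(\<Prod>t\<in>T. if P t then (1::complex) else 0) = (if \<forall>t\<in>T. P t then 1 else 0)"
  using assms by (auto simp: prod_zero_iff intro!: prod.neutral)

lemma fourier_count:
  fixes T :: "'t set" and L :: "'l set" and Y :: "'l \<Rightarrow> 'y set"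
    and m :: "'l \<Rightarrow> 'y \<Rightarrow> 't \<Rightarrow> int" and R :: "'t \<Rightarrow> int" and K :: nat
  assumes T: "finite T" and L: "finite L" and Y: "\<And>l. l \<in> L \<Longrightarrow> finite (Y l)" and K: "K > 0"
    and bnd: "\<And>Yc t. Yc \<in> PiE L Y \<Longrightarrow> t \<in> T \<Longrightarrow> \<bar>(\<Sum>l\<in>L. m l (Yc l) t) - R t\<bar> < int K"
  shows "(\<Sum>\<Theta>\<in>PiE T (\<lambda>_. {..<K}). cis (\<Sum>t\<in>T. ang K (\<Theta> t) * of_int (- R t)) *
            (\<Prod>l\<in>L. \<Sum>y\<in>Y l. cis (\<Sum>t\<in>T. ang K (\<Theta> t) * of_int (m l y t))))
        = of_nat (K ^ card T * card {Yc \<in> PiE L Y. \<forall>t\<in>T. (\<Sum>l\<in>L. m l (Yc l) t) = R t})"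
proof -
  let ?P = "PiE L Y"
  let ?n = "\<lambda>Yc t. (\<Sum>l\<in>L. m l (Yc l) t)"
  have finP: "finite ?P" using L Y by (intro finite_PiE) auto
  have finT: "finite (PiE T (\<lambda>_. {..<K}))" using T by (intro finite_PiE) auto
  have "of_nat (K ^ card T * card {Yc \<in> ?P. \<forall>t\<in>T. ?n Yc t = R t})
      = (of_nat K ^ card T :: complex) * (\<Sum>Yc\<in>?P. if \<forall>t\<in>T. ?n Yc t = R t then 1 else 0)"
    using finP by (simp add: sum.inter_filter[symmetric])
  also have "\<dots> = (\<Sum>Yc\<in>?P. \<Prod>t\<in>T. of_nat K * (if ?n Yc t = R t then 1 else 0))"
    by (simp add: sum_distrib_left prod.distrib prod_indicator[OF T])
  also have "\<dots> = (\<Sum>Yc\<in>?P. \<Prod>t\<in>T. \<Sum>j<K. cis (ang K j * of_int (?n Yc t - R t)))"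
  proof (intro sum.cong refl prod.cong)
    fix Yc t assume "Yc \<in> ?P" "t \<in> T"
    then show "of_nat K * (if ?n Yc t = R t then 1 else 0) = (\<Sum>j<K. cis (ang K j * of_int (?n Yc t - R t)))"
      using roots_sum[OF K bnd] by auto
  qed
  also have "\<dots> = (\<Sum>Yc\<in>?P. \<Sum>\<Theta>\<in>PiE T (\<lambda>_. {..<K}). \<Prod>t\<in>T. cis (ang K (\<Theta> t) * of_int (?n Yc t - R t)))"
    using T by (simp add: prod_sum_PiE)
  also have "\<dots> = (\<Sum>\<Theta>\<in>PiE T (\<lambda>_. {..<K}). \<Sum>Yc\<in>?P. \<Prod>t\<in>T. cis (ang K (\<Theta> t) * of_int (?n Yc t - R t)))"
    by (rule sum.swap)
  also have "\<dots> = (\<Sum>\<Theta>\<in>PiE T (\<lambda>_. {..<K}). cis (\<Sum>t\<in>T. ang K (\<Theta> t) * of_int (- R t)) *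
            (\<Prod>l\<in>L. \<Sum>y\<in>Y l. cis (\<Sum>t\<in>T. ang K (\<Theta> t) * of_int (m l y t))))"
  proof (intro sum.cong refl)
    fix \<Theta> assume "\<Theta> \<in> PiE T (\<lambda>_. {..<K})"
    have "(\<Sum>Yc\<in>?P. \<Prod>t\<in>T. cis (ang K (\<Theta> t) * of_int (?n Yc t - R t)))
        = (\<Sum>Yc\<in>?P. cis (\<Sum>t\<in>T. ang K (\<Theta> t) * of_int (- R t)) *
              (\<Prod>l\<in>L. cis (\<Sum>t\<in>T. ang K (\<Theta> t) * of_int (m l (Yc l) t))))"
    proof (intro sum.cong refl)
      fix Yc assume "Yc \<in> ?P"
      have "(\<Prod>t\<in>T. cis (ang K (\<Theta> t) * of_int (?n Yc t - R t)))
          = cis (\<Sum>t\<in>T. ang K (\<Theta> t) * of_int (?n Yc t - R t))" by (rule prod_cis[OF T])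
      also have "(\<Sum>t\<in>T. ang K (\<Theta> t) * of_int (?n Yc t - R t))
          = (\<Sum>t\<in>T. ang K (\<Theta> t) * of_int (- R t)) + (\<Sum>l\<in>L. \<Sum>t\<in>T. ang K (\<Theta> t) * of_int (m l (Yc l) t))"
        by (simp add: sum.swap[of _ L] sum_distrib_left algebra_simps sum.distrib sum_subtractf sum_negf)
      finally show "(\<Prod>t\<in>T. cis (ang K (\<Theta> t) * of_int (?n Yc t - R t))) =
          cis (\<Sum>t\<in>T. ang K (\<Theta> t) * of_int (- R t)) *
              (\<Prod>l\<in>L. cis (\<Sum>t\<in>T. ang K (\<Theta> t) * of_int (m l (Yc l) t)))"
        by (simp add: prod_cis[OF L] cis_mult)
    qed
    also have "\<dots> = cis (\<Sum>t\<in>T. ang K (\<Theta> t) * of_int (- R t)) *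
            (\<Prod>l\<in>L. \<Sum>y\<in>Y l. cis (\<Sum>t\<in>T. ang K (\<Theta> t) * of_int (m l y t)))"
      by (simp add: sum_distrib_left[symmetric] prod_sum_PiE[OF L Y])
    finally show "(\<Sum>Yc\<in>?P. \<Prod>t\<in>T. cis (ang K (\<Theta> t) * of_int (?n Yc t - R t))) = \<dots>" .
  qed
  finally show ?thesis by simp
qed

lemma ang_neg:
  assumes K: "K = 2 * L" "L > 0" and j: "j < K"
  shows "cos (ang K ((K - j) mod K)) = cos (ang K j)" "sin (ang K ((K - j) mod K)) = - sin (ang K j)"
proof -
  have "cos (ang K ((K - j) mod K)) = cos (ang K j) \<and> sin (ang K ((K - j) mod K)) = - sin (ang K j)"
  proof (cases "j = 0")
    case True then show ?thesis by (simp add: ang_def)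
  next
    case False
    then have "(K - j) mod K = K - j" using j by simp
    moreover have "ang K (K - j) = 2 * pi - ang K j" using j K by (simp add: ang_def of_nat_diff field_simps)
    ultimately show ?thesis by (simp add: cos_diff sin_diff)
  qed
  then show "cos (ang K ((K - j) mod K)) = cos (ang K j)" "sin (ang K ((K - j) mod K)) = - sin (ang K j)" by auto
qed

lemma ang_shift:
  assumes K: "K = 2 * L" "L > 0" and j: "j < K"
  shows "cos (ang K ((j + L) mod K)) = - cos (ang K j)" "sin (ang K ((j + L) mod K)) = - sin (ang K j)"
proof -
  have "cos (ang K ((j + L) mod K)) = - cos (ang K j) \<and> sin (ang K ((j + L) mod K)) = - sin (ang K j)"
  proof (cases "j < L")
    case True
    then have "(j + L) mod K = j + L" using K by simp
    moreover have "ang K (j + L) = ang K j + pi" using K by (simp add: ang_def field_simps)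
    ultimately show ?thesis by simp
  next
    case False
    then have "(j + L) mod K = j - L" using K j by (simp add: mod_if)
    moreover have "ang K (j - L) = ang K j - pi" using K False by (simp add: ang_def of_nat_diff field_simps)
    ultimately show ?thesis by (simp add: cos_diff sin_diff)
  qed
  then show "cos (ang K ((j + L) mod K)) = - cos (ang K j)" "sin (ang K ((j + L) mod K)) = - sin (ang K j)" by auto
qed

lemma trig_sum_nonneg:
  assumes K: "K = 2 * L" "L > 0"
  shows "0 \<le> (\<Sum>j<K. cos (ang K j) ^ a * sin (ang K j) ^ b)"
proof -
  let ?f = "\<lambda>j. cos (ang K j) ^ a * sin (ang K j) ^ b"
  have inv1: "(K - (K - j) mod K) mod K = j" if "j < K" for j
    using that K by (cases "j = 0") auto
  have inv2: "((j + L) mod K + L) mod K = j" if "j < K" for j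
    using that K by (cases "j < L") (auto simp: mod_if)
  show ?thesis
  proof (cases "odd b")
    case True
    have "(\<Sum>j<K. ?f j) = (\<Sum>j<K. - ?f j)"
      by (rule sum.reindex_bij_witness[where i = "\<lambda>j. (K - j) mod K" and j = "\<lambda>j. (K - j) mod K"])
        (use inv1 K ang_neg[OF K] True in \<open>auto simp: power_minus_odd\<close>)
    then show ?thesis by (simp add: sum_negf)
  next
    case b: False
    show ?thesis
    proof (cases "odd a")
      case True
      have "(\<Sum>j<K. ?f j) = (\<Sum>j<K. - ?f j)"
        by (rule sum.reindex_bij_witness[where i = "\<lambda>j. (j + L) mod K" and j = "\<lambda>j. (j + L) mod K"])
          (use inv2 K ang_shift[OF K] True b in \<open>auto simp: power_minus_odd power_minus_even\<close>)
      then show ?thesis by (simp add: sum_negf)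
    next
      case False
      then show ?thesis using b by (intro sum_nonneg mult_nonneg_nonneg) (auto simp: zero_le_even_power)
    qed
  qed
qed

definition beta :: "nat \<Rightarrow> real \<Rightarrow> real" where
  "beta k y = (if k = 1 then cos y else if k = 2 then sin y else 1)"

lemma prod_beta:
  assumes "finite S"
  shows "(\<Prod>x\<in>S. beta (k x) y) = cos y ^ card {x\<in>S. k x = 1} * sin y ^ card {x\<in>S. k x = 2}"
proof -
  have "(\<Prod>x\<in>S. beta (k x) y) = (\<Prod>x\<in>S \<inter> {x. k x = 1}. cos y) * (\<Prod>x\<in>S \<inter> - {x. k x = 1}. if k x = 2 then sin y else 1)"
    unfolding beta_def by (rule prod.If_cases[OF assms])
  also have "(\<Prod>x\<in>S \<inter> - {x. k x = 1}. if k x = 2 then sin y else 1) = 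
     (\<Prod>x\<in>(S \<inter> - {x. k x = 1}) \<inter> {x. k x = 2}. sin y) * (\<Prod>x\<in>(S \<inter> - {x. k x = 1}) \<inter> - {x. k x = 2}. 1)"
    by (rule prod.If_cases) (use assms in auto)
  also have "(S \<inter> - {x. k x = 1}) \<inter> {x. k x = 2} = {x\<in>S. k x = 2}" by auto
  also have "S \<inter> {x. k x = 1} = {x\<in>S. k x = 1}" by auto
  finally show ?thesis by simp
qed

lemma beta_sum_nonneg:
  assumes K: "K = 2 * L" "L > 0" and S: "finite S"
  shows "0 \<le> (\<Sum>j<K. \<Prod>x\<in>S. beta (k x) (ang K j))"
  using trig_sum_nonneg[OF K] by (simp add: prod_beta[OF S])

definition lft :: "('a set \<Rightarrow> 'a) \<Rightarrow> ('a set \<Rightarrow> 'a) \<Rightarrow> ('a set \<Rightarrow> bool) \<Rightarrow> 'a set \<Rightarrow> bool \<Rightarrow> ('a \<times> bool) set" where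
  "lft pp qq s e i = {(pp e, i), (qq e, i \<noteq> s e)}"

lemma cover_eq:
  assumes ppq: "\<And>e. e \<in> E \<Longrightarrow> {pp e, qq e} = e \<and> pp e \<noteq> qq e"
  shows "cover_edges E s = (\<lambda>(e,i). lft pp qq s e i) ` (E \<times> UNIV)"
proof
  show "cover_edges E s \<subseteq> (\<lambda>(e,i). lft pp qq s e i) ` (E \<times> UNIV)"
  proof
    fix x assume "x \<in> cover_edges E s"
    then obtain u v i j where x: "x = {(u, i), (v, j)}" and e: "{u, v} \<in> E" and ij: "(i \<noteq> j) = s {u, v}"
      unfolding cover_edges_def by blast
    obtain e where e_def: "e = {u, v}" by blast
    have pq: "{pp e, qq e} = {u, v}" "pp e \<noteq> qq e" using ppq e e_def by auto
    have "(u = pp e \<and> v = qq e) \<or> (u = qq e \<and> v = pp e)" using pq(1) by (simp add: doubleton_eq_iff) blast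
    then show "x \<in> (\<lambda>(e,i). lft pp qq s e i) ` (E \<times> UNIV)"
    proof
      assume uv: "u = pp e \<and> v = qq e"
      have se: "s e = s {u, v}" using e_def by simp
      have "j = (i \<noteq> s e)" using ij se by auto
      then have "x = lft pp qq s e i" using x uv unfolding lft_def by simp
      then show ?thesis using e e_def by auto
    next
      assume uv: "u = qq e \<and> v = pp e"
      have se: "s e = s {u, v}" using e_def by simp
      have "i = (j \<noteq> s e)" using ij se by auto
      then have "x = lft pp qq s e j" using x uv unfolding lft_def by auto
      then show ?thesis using e e_def by auto
    qed
  qed
next
  show "(\<lambda>(e,i). lft pp qq s e i) ` (E \<times> UNIV) \<subseteq> cover_edges E s"
  proof clarify
    fix e i assume e: "e \<in> E"
    then have "{pp e, qq e} \<in> E" using ppq by auto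
    then have "\<exists>u v i' j. lft pp qq s e i = {(u, i'), (v, j)} \<and> {u, v} \<in> E \<and> ((i' \<noteq> j) = s {u, v})"
      using ppq[OF e] unfolding lft_def by (intro exI[of _ "pp e"] exI[of _ "qq e"] exI[of _ i] exI[of _ "i \<noteq> s e"]) auto
    then show "lft pp qq s e i \<in> cover_edges E s"
      unfolding cover_edges_def by blast
  qed
qed

lemma lft_inj:
  assumes ppq: "\<And>e. e \<in> E \<Longrightarrow> {pp e, qq e} = e \<and> pp e \<noteq> qq e"
  shows "inj_on (\<lambda>(e,i). lft pp qq s e i) (E \<times> UNIV)"
proof (rule inj_onI, clarify)
  fix e i e' i' assume e: "e \<in> E" "e' \<in> E" and eq: "lft pp qq s e i = lft pp qq s e' i'"
  have fe: "fst ` lft pp qq s e i = e" if "e \<in> E" for e i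
  proof -
    have "fst ` lft pp qq s e i = {pp e, qq e}" unfolding lft_def by auto
    then show ?thesis using ppq[OF that] by simp
  qed
  have ee: "e = e'" using fe[OF e(1), of i] fe[OF e(2), of i'] eq by simp
  have "(pp e, i) \<in> lft pp qq s e i" by (simp add: lft_def)
  then have "(pp e, i) \<in> lft pp qq s e i'" using eq ee by simp
  then have "(pp e, i) \<in> {(pp e, i'), (qq e, i' \<noteq> s e)}" unfolding lft_def .
  moreover have "pp e \<noteq> qq e" using ppq[OF e(1)] by blast
  ultimately have "i = i'" by auto
  then show "e = e' \<and> i = i'" using ee by simp
qed

definition mm :: "('a \<times> bool) \<Rightarrow> ('a \<times> bool) \<Rightarrow> int" where
  "mm y t = (if fst y = fst t then (if snd t \<and> snd y then -1 else 1) else 0)"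

definition RR :: "('a \<Rightarrow> int) \<Rightarrow> ('a \<times> bool) \<Rightarrow> int" where
  "RR r t = (if snd t then 0 else 2 * r (fst t))"

lemma sum_ind_card: "finite A \<Longrightarrow> (\<Sum>x\<in>A. if P x then 1 else 0) = (of_nat (card {x\<in>A. P x}) :: 'b :: comm_ring_1)"
  by (simp add: sum.inter_filter[symmetric])

lemma eps_as_card:
  assumes fin: "finite EH"
  shows "eps (V \<times> UNIV) EH (lift_vec r) =
     card {Yc \<in> PiE EH (\<lambda>l. l). \<forall>t\<in>V \<times> UNIV. (\<Sum>l\<in>EH. mm (Yc l) t) = RR r t}"
proof -
  have orient: "orientations EH = PiE EH (\<lambda>l. l)"
    unfolding orientations_def PiE_def Pi_def extensional_def by auto
  have key: "(\<forall>v\<in>V \<times> UNIV. int (indeg EH h v) = lift_vec r v) \<longleftrightarrow>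
        (\<forall>t\<in>V \<times> UNIV. (\<Sum>l\<in>EH. mm (h l) t) = RR r t)" for h
  proof -
    have s0: "(\<Sum>l\<in>EH. mm (h l) (w, False)) = int (indeg EH h (w, False)) + int (indeg EH h (w, True))" for w
    proof -
      have "(\<Sum>l\<in>EH. mm (h l) (w, False)) = (\<Sum>l\<in>EH. (if h l = (w, False) then 1 else 0) + (if h l = (w, True) then 1 else 0))"
        by (intro sum.cong refl) (auto simp: mm_def prod_eq_iff)
      also have "\<dots> = int (indeg EH h (w, False)) + int (indeg EH h (w, True))"
        unfolding sum.distrib indeg_def using fin by (simp add: sum_ind_card)
      finally show ?thesis .
    qed
    have s1: "(\<Sum>l\<in>EH. mm (h l) (w, True)) = int (indeg EH h (w, False)) - int (indeg EH h (w, True))" for w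
    proof -
      have "(\<Sum>l\<in>EH. mm (h l) (w, True)) = (\<Sum>l\<in>EH. (if h l = (w, False) then 1 else 0) - (if h l = (w, True) then 1 else 0))"
        by (intro sum.cong refl) (auto simp: mm_def prod_eq_iff)
      also have "\<dots> = int (indeg EH h (w, False)) - int (indeg EH h (w, True))"
        unfolding sum_subtractf indeg_def using fin by (simp add: sum_ind_card)
      finally show ?thesis .
    qed
    show ?thesis
    proof
      assume a: "\<forall>v\<in>V \<times> UNIV. int (indeg EH h v) = lift_vec r v"
      show "\<forall>t\<in>V \<times> UNIV. (\<Sum>l\<in>EH. mm (h l) t) = RR r t"
      proof clarify
        fix w b assume w: "w \<in> V"
        then show "(\<Sum>l\<in>EH. mm (h l) (w, b)) = RR r (w, b)"
          using a s0 s1 by (cases b) (auto simp: RR_def lift_vec_def)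
      qed
    next
      assume a: "\<forall>t\<in>V \<times> UNIV. (\<Sum>l\<in>EH. mm (h l) t) = RR r t"
      show "\<forall>v\<in>V \<times> UNIV. int (indeg EH h v) = lift_vec r v"
      proof clarify
        fix w b assume w: "w \<in> V"
        have "int (indeg EH h (w, False)) + int (indeg EH h (w, True)) = 2 * r w"
          "int (indeg EH h (w, False)) - int (indeg EH h (w, True)) = 0"
          using a w s0[of w] s1[of w] by (auto simp: RR_def)
        then show "int (indeg EH h (w, b)) = lift_vec r (w, b)"
          by (cases b) (auto simp: lift_vec_def)
      qed
    qed
  qed
  show ?thesis unfolding eps_def orient using key by simp
qed

definition psi :: "nat \<Rightarrow> ('a \<times> bool \<Rightarrow> nat) \<Rightarrow> 'a \<Rightarrow> real" where
  "psi K \<Theta> w = ang K (\<Theta> (w, False))"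
definition phi :: "nat \<Rightarrow> ('a \<times> bool \<Rightarrow> nat) \<Rightarrow> 'a \<Rightarrow> real" where
  "phi K \<Theta> w = ang K (\<Theta> (w, True))"

lemma sum_VxB:
  fixes f :: "'a \<times> bool \<Rightarrow> 'b :: comm_monoid_add"
  shows "(\<Sum>t\<in>V \<times> UNIV. f t) = (\<Sum>w\<in>V. f (w, False) + f (w, True))"
  by (simp only: sum.cartesian_product') (simp add: UNIV_bool add.commute)

lemma prod_ExB:
  fixes f :: "'a \<times> bool \<Rightarrow> 'b :: comm_monoid_mult"
  shows "(\<Prod>t\<in>E \<times> UNIV. f t) = (\<Prod>e\<in>E. f (e, False) * f (e, True))"
  by (simp only: prod.cartesian_product') (simp add: UNIV_bool mult.commute)

lemma inner_sum:
  assumes "w0 \<in> V" "finite V"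
  shows "(\<Sum>t\<in>V \<times> UNIV. ang K (\<Theta> t) * of_int (mm (w0, b0) t)) =
         psi K \<Theta> w0 + (if b0 then - phi K \<Theta> w0 else phi K \<Theta> w0)"
proof -
  have "(\<Sum>t\<in>V \<times> UNIV. ang K (\<Theta> t) * of_int (mm (w0, b0) t)) =
     (\<Sum>w\<in>V. if w0 = w then psi K \<Theta> w + (if b0 then - phi K \<Theta> w else phi K \<Theta> w) else 0)"
    unfolding sum_VxB by (intro sum.cong refl) (auto simp: mm_def psi_def phi_def)
  also have "\<dots> = psi K \<Theta> w0 + (if b0 then - phi K \<Theta> w0 else phi K \<Theta> w0)"
    using assms by (simp add: sum.delta')
  finally show ?thesis .
qed

lemma Rterm:
  "(\<Sum>t\<in>V \<times> UNIV. ang K (\<Theta> t) * of_int (- RR r t)) = - (\<Sum>w\<in>V. 2 * of_int (r w) * psi K \<Theta> w)"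
  unfolding sum_VxB by (simp add: RR_def psi_def sum_negf[symmetric] algebra_simps)

lemma cis_fac:
  "(cis (a + c) + cis (b + d)) * (cis (a - c) + cis (b - d)) =
     cis (2*a) + cis (2*b) + 2 * cis (a + b) * of_real (cos c * cos d + sin c * sin d)"
proof -
  have "(cis (a + c) + cis (b + d)) * (cis (a - c) + cis (b - d)) =
     cis (2*a) + cis (2*b) + (cis (a + b + (c - d)) + cis (a + b - (c - d)))"
    by (simp add: cis_mult algebra_simps)
  also have "cis (a + b + (c - d)) + cis (a + b - (c - d)) = 2 * cis (a + b) * of_real (cos (c - d))"
    by (simp add: complex_eq_iff cos_add sin_add cos_diff sin_diff algebra_simps)
  also have "cos (c - d) = cos c * cos d + sin c * sin d" by (simp add: cos_diff)
  finally show ?thesis .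
qed

definition Apart :: "nat \<Rightarrow> real \<Rightarrow> real \<Rightarrow> complex" where
  "Apart k a b = (if k = 0 then cis (2*a) + cis (2*b) else 2 * cis (a + b))"

definition sg :: "('a set \<Rightarrow> bool) \<Rightarrow> 'a set \<Rightarrow> nat \<Rightarrow> real" where
  "sg s e k = (if k = 2 \<and> s e then -1 else 1)"

definition Tm :: "nat \<Rightarrow> real \<Rightarrow> real \<Rightarrow> real \<Rightarrow> real \<Rightarrow> complex" where
  "Tm k a b c d = Apart k a b * of_real (beta k c * beta k d)"

lemma fac_expand:
  "(\<Sum>k\<in>{0,1,2::nat}. of_real (sg s e k) * Tm k a b c d) =
     cis (2*a) + cis (2*b) + 2 * cis (a + b) * of_real (cos c * cos d + (if s e then -1 else 1) * sin c * sin d)"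
  by (simp add: sg_def Tm_def Apart_def beta_def algebra_simps)

lemma edge_factor:
  fixes \<Theta> :: "'a \<times> bool \<Rightarrow> nat" and K :: nat and V :: "'a set"
  assumes pq: "pp e \<noteq> qq e" "pp e \<in> V" "qq e \<in> V" and finV: "finite V"
  defines "G \<equiv> \<lambda>l. (\<Sum>y\<in>l. cis (\<Sum>t\<in>V \<times> UNIV. ang K (\<Theta> t) * of_int (mm y t)))"
  shows "G (lft pp qq s e False) * G (lft pp qq s e True) =
     (\<Sum>k\<in>{0,1,2::nat}. of_real (sg s e k) *
        Tm k (psi K \<Theta> (pp e)) (psi K \<Theta> (qq e)) (phi K \<Theta> (pp e)) (phi K \<Theta> (qq e)))"
proof -
  let ?a = "psi K \<Theta> (pp e)" and ?b = "psi K \<Theta> (qq e)" and ?c = "phi K \<Theta> (pp e)" and ?d = "phi K \<Theta> (qq e)"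
  have G: "G (lft pp qq s e i) = cis (?a + (if i then - ?c else ?c)) +
             cis (?b + (if (i \<noteq> s e) then - ?d else ?d))" for i
    unfolding G_def lft_def using pq finV by (simp add: inner_sum)
  show ?thesis
  proof (cases "s e")
    case False
    then show ?thesis unfolding fac_expand G using cis_fac[of ?a ?c ?b ?d] by (simp add: algebra_simps)
  next
    case True
    then show ?thesis unfolding fac_expand G using cis_fac[of ?a ?c ?b "- ?d"] by (simp add: algebra_simps)
  qed
qed

definition Wc :: "nat \<Rightarrow> 'a set \<Rightarrow> 'a set set \<Rightarrow> ('a set \<Rightarrow> 'a) \<Rightarrow> ('a set \<Rightarrow> 'a) \<Rightarrow> ('a \<Rightarrow> int) \<Rightarrow> ('a set \<Rightarrow> nat) \<Rightarrow> complex" where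
  "Wc K V E pp qq r c = (\<Sum>\<Theta>\<in>PiE (V \<times> UNIV) (\<lambda>_. {..<K}).
      cis (- (\<Sum>w\<in>V. 2 * of_int (r w) * psi K \<Theta> w)) *
      (\<Prod>e\<in>E. Tm (c e) (psi K \<Theta> (pp e)) (psi K \<Theta> (qq e)) (phi K \<Theta> (pp e)) (phi K \<Theta> (qq e))))"

lemma abs_sum_le_card:
  fixes f :: "'b \<Rightarrow> int"
  assumes "\<And>l. l \<in> L \<Longrightarrow> \<bar>f l\<bar> \<le> B"
  shows "\<bar>\<Sum>l\<in>L. f l\<bar> \<le> int (card L) * B"
proof -
  have "\<bar>\<Sum>l\<in>L. f l\<bar> \<le> (\<Sum>l\<in>L. \<bar>f l\<bar>)" by (rule sum_abs)
  also have "\<dots> \<le> of_nat (card L) * B" by (rule sum_bounded_above) (use assms in auto)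
  finally show ?thesis by simp
qed

lemma main_formula:
  fixes V :: "'a set" and E :: "'a set set" and r :: "'a \<Rightarrow> int" and K :: nat
  assumes finV: "finite V" and finE: "finite E"
    and ppq: "\<And>e. e \<in> E \<Longrightarrow> {pp e, qq e} = e \<and> pp e \<noteq> qq e"
    and inV: "\<And>e. e \<in> E \<Longrightarrow> pp e \<in> V \<and> qq e \<in> V"
    and K: "K > 0" and bnd: "\<And>w. w \<in> V \<Longrightarrow> 4 * int (card E) + 2 * \<bar>r w\<bar> < int K"
  shows "of_nat (K ^ card (V \<times> (UNIV::bool set)) * eps (V \<times> UNIV) (cover_edges E s) (lift_vec r)) =
     (\<Sum>c\<in>PiE E (\<lambda>_. {0,1,2::nat}). of_real (\<Prod>e\<in>E. sg s e (c e)) * Wc K V E pp qq r c)"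
proof -
  let ?EH = "cover_edges E s"
  let ?h = "\<lambda>(e,i). lft pp qq s e i"
  have EHeq: "?EH = ?h ` (E \<times> UNIV)" by (rule cover_eq[OF ppq])
  have inj: "inj_on ?h (E \<times> UNIV)" by (rule lft_inj[OF ppq])
  have finEH: "finite ?EH" unfolding EHeq using finE by simp
  have "card ?EH \<le> card (E \<times> (UNIV :: bool set))" unfolding EHeq by (rule card_image_le) (use finE in simp)
  then have cardEH: "card ?EH \<le> 2 * card E" by (simp add: card_cartesian_product)
  have finl: "finite l" if "l \<in> ?EH" for l using that unfolding EHeq lft_def by auto
  have finT: "finite (V \<times> (UNIV :: bool set))" using finV by simp
  have GL: "(\<Sum>\<Theta>\<in>PiE (V \<times> UNIV) (\<lambda>_. {..<K}). cis (\<Sum>t\<in>V \<times> UNIV. ang K (\<Theta> t) * of_int (- RR r t)) *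
            (\<Prod>l\<in>?EH. \<Sum>y\<in>l. cis (\<Sum>t\<in>V \<times> UNIV. ang K (\<Theta> t) * of_int (mm y t))))
        = of_nat (K ^ card (V \<times> (UNIV::bool set)) * card {Yc \<in> PiE ?EH (\<lambda>l. l). \<forall>t\<in>V \<times> UNIV. (\<Sum>l\<in>?EH. mm (Yc l) t) = RR r t})"
  proof (rule fourier_count[OF finT finEH finl K])
    fix Yc and t :: "'a \<times> bool" assume t: "t \<in> V \<times> UNIV"
    have "\<bar>\<Sum>l\<in>?EH. mm (Yc l) t\<bar> \<le> int (card ?EH) * 1"
      by (rule abs_sum_le_card) (auto simp: mm_def)
    moreover have "\<bar>RR r t\<bar> \<le> 2 * \<bar>r (fst t)\<bar>" by (auto simp: RR_def abs_mult)
    moreover have "4 * int (card E) + 2 * \<bar>r (fst t)\<bar> < int K" using bnd t by auto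
    ultimately show "\<bar>(\<Sum>l\<in>?EH. mm (Yc l) t) - RR r t\<bar> < int K" using cardEH by linarith
  qed
  have per_theta: "cis (\<Sum>t\<in>V \<times> UNIV. ang K (\<Theta> t) * of_int (- RR r t)) *
            (\<Prod>l\<in>?EH. \<Sum>y\<in>l. cis (\<Sum>t\<in>V \<times> UNIV. ang K (\<Theta> t) * of_int (mm y t)))
      = (\<Sum>c\<in>PiE E (\<lambda>_. {0,1,2::nat}). of_real (\<Prod>e\<in>E. sg s e (c e)) *
          (cis (- (\<Sum>w\<in>V. 2 * of_int (r w) * psi K \<Theta> w)) *
           (\<Prod>e\<in>E. Tm (c e) (psi K \<Theta> (pp e)) (psi K \<Theta> (qq e)) (phi K \<Theta> (pp e)) (phi K \<Theta> (qq e)))))"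
    for \<Theta> :: "'a \<times> bool \<Rightarrow> nat"
  proof -
    let ?G = "\<lambda>l. (\<Sum>y\<in>l. cis (\<Sum>t\<in>V \<times> UNIV. ang K (\<Theta> t) * of_int (mm y t)))"
    let ?T = "\<lambda>e k. Tm k (psi K \<Theta> (pp e)) (psi K \<Theta> (qq e)) (phi K \<Theta> (pp e)) (phi K \<Theta> (qq e))"
    have "(\<Prod>l\<in>?EH. ?G l) = (\<Prod>x\<in>E \<times> UNIV. ?G (?h x))"
      unfolding EHeq by (subst prod.reindex[OF inj]) (simp add: comp_def)
    also have "\<dots> = (\<Prod>e\<in>E. ?G (lft pp qq s e False) * ?G (lft pp qq s e True))"
      by (subst prod_ExB) simp
    also have "\<dots> = (\<Prod>e\<in>E. \<Sum>k\<in>{0,1,2::nat}. of_real (sg s e k) * ?T e k)"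
    proof (rule prod.cong[OF refl])
      fix e assume e: "e \<in> E"
      show "?G (lft pp qq s e False) * ?G (lft pp qq s e True) = (\<Sum>k\<in>{0,1,2::nat}. of_real (sg s e k) * ?T e k)"
        by (rule edge_factor) (use ppq[OF e] inV[OF e] finV in auto)
    qed
    also have "\<dots> = (\<Sum>c\<in>PiE E (\<lambda>_. {0,1,2::nat}). \<Prod>e\<in>E. of_real (sg s e (c e)) * ?T e (c e))"
      by (rule prod_sum_PiE) (use finE in auto)
    also have "\<dots> = (\<Sum>c\<in>PiE E (\<lambda>_. {0,1,2::nat}). of_real (\<Prod>e\<in>E. sg s e (c e)) * (\<Prod>e\<in>E. ?T e (c e)))"
      by (simp add: prod.distrib)
    finally have P: "(\<Prod>l\<in>?EH. ?G l) = \<dots>" .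
    show ?thesis unfolding P Rterm by (simp add: sum_distrib_left mult_ac)
  qed
  have "of_nat (K ^ card (V \<times> (UNIV::bool set)) * eps (V \<times> UNIV) ?EH (lift_vec r))
      = (\<Sum>\<Theta>\<in>PiE (V \<times> UNIV) (\<lambda>_. {..<K}). cis (\<Sum>t\<in>V \<times> UNIV. ang K (\<Theta> t) * of_int (- RR r t)) *
            (\<Prod>l\<in>?EH. \<Sum>y\<in>l. cis (\<Sum>t\<in>V \<times> UNIV. ang K (\<Theta> t) * of_int (mm y t))))"
    unfolding GL eps_as_card[OF finEH] ..
  also have "\<dots> = (\<Sum>\<Theta>\<in>PiE (V \<times> UNIV) (\<lambda>_. {..<K}). \<Sum>c\<in>PiE E (\<lambda>_. {0,1,2::nat}). of_real (\<Prod>e\<in>E. sg s e (c e)) *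
          (cis (- (\<Sum>w\<in>V. 2 * of_int (r w) * psi K \<Theta> w)) *
           (\<Prod>e\<in>E. Tm (c e) (psi K \<Theta> (pp e)) (psi K \<Theta> (qq e)) (phi K \<Theta> (pp e)) (phi K \<Theta> (qq e)))))"
    by (intro sum.cong refl per_theta)
  also have "\<dots> = (\<Sum>c\<in>PiE E (\<lambda>_. {0,1,2::nat}). of_real (\<Prod>e\<in>E. sg s e (c e)) * Wc K V E pp qq r c)"
    unfolding Wc_def by (subst sum.swap) (simp add: sum_distrib_left)
  finally show ?thesis .
qed

lemma sum_split:
  fixes f :: "('a \<times> bool \<Rightarrow> 'c) \<Rightarrow> 'b :: comm_monoid_add"
  shows "(\<Sum>\<Theta>\<in>PiE (V \<times> UNIV) (\<lambda>_. S). f \<Theta>) =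
         (\<Sum>\<Psi>\<in>PiE V (\<lambda>_. S). \<Sum>\<Phi>\<in>PiE V (\<lambda>_. S). f (\<lambda>(w,b). if b then \<Phi> w else \<Psi> w))"
proof -
  define mg where "mg = (\<lambda>x::('a \<Rightarrow> 'c) \<times> ('a \<Rightarrow> 'c). (\<lambda>(w,b). if b then snd x w else fst x w))"
  have "(\<Sum>\<Psi>\<in>PiE V (\<lambda>_. S). \<Sum>\<Phi>\<in>PiE V (\<lambda>_. S). f (\<lambda>(w,b). if b then \<Phi> w else \<Psi> w))
      = (\<Sum>x\<in>PiE V (\<lambda>_. S) \<times> PiE V (\<lambda>_. S). f (mg x))"
    unfolding sum.cartesian_product mg_def by (intro sum.cong refl) (auto simp: split_beta)
  also have "\<dots> = (\<Sum>\<Theta>\<in>PiE (V \<times> UNIV) (\<lambda>_. S). f \<Theta>)"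
  proof (rule sum.reindex_bij_witness[where j = mg
                                       and i = "\<lambda>\<Theta>. (\<lambda>w. \<Theta> (w, False), \<lambda>w. \<Theta> (w, True))"])
    fix x assume x: "x \<in> PiE V (\<lambda>_. S) \<times> PiE V (\<lambda>_. S)"
    show "(\<lambda>w. mg x (w, False), \<lambda>w. mg x (w, True)) = x"
      unfolding mg_def by (cases x) auto
    show "mg x \<in> PiE (V \<times> UNIV) (\<lambda>_. S)"
      using x unfolding mg_def by (auto simp: PiE_def Pi_def extensional_def)
  next
    fix \<Theta> :: "'a \<times> bool \<Rightarrow> 'c" assume th: "\<Theta> \<in> PiE (V \<times> UNIV) (\<lambda>_. S)"
    show "mg (\<lambda>w. \<Theta> (w, False), \<lambda>w. \<Theta> (w, True)) = \<Theta>"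
      unfolding mg_def by (auto simp: fun_eq_iff)
    show "(\<lambda>w. \<Theta> (w, False), \<lambda>w. \<Theta> (w, True)) \<in> PiE V (\<lambda>_. S) \<times> PiE V (\<lambda>_. S)"
      using th by (auto simp: PiE_def Pi_def extensional_def)
  qed simp
  finally show ?thesis ..
qed

lemma sum_delta_int:
  fixes f :: "'a \<Rightarrow> real"
  assumes "finite V" "p \<in> V"
  shows "(\<Sum>w\<in>V. f w * of_int (if w = p then k else 0)) = f p * of_int k"
proof -
  have "(\<Sum>w\<in>V. f w * of_int (if w = p then k else 0)) = (\<Sum>w\<in>V. if w = p then f w * of_int k else 0)"
    by (intro sum.cong) auto
  then show ?thesis using assms by simp
qed

lemma psi_part:
  fixes V :: "'a set" and E :: "'a set set" and r :: "'a \<Rightarrow> int" and K :: nat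
  assumes finV: "finite V" and finE: "finite E"
    and inV: "\<And>e. e \<in> E \<Longrightarrow> pp e \<in> V \<and> qq e \<in> V"
    and K: "K > 0" and bnd: "\<And>w. w \<in> V \<Longrightarrow> 4 * int (card E) + 2 * \<bar>r w\<bar> < int K"
  shows "\<exists>n. (\<Sum>\<Psi>\<in>PiE V (\<lambda>_. {..<K}). cis (- (\<Sum>w\<in>V. 2 * of_int (r w) * ang K (\<Psi> w))) *
            (\<Prod>e\<in>E. Apart (c e) (ang K (\<Psi> (pp e))) (ang K (\<Psi> (qq e))))) = of_nat n"
proof -
  define m :: "'a set \<Rightarrow> bool \<Rightarrow> 'a \<Rightarrow> int" where
    "m = (\<lambda>e y w. if c e = 0 then (if y then (if w = qq e then 2 else 0) else (if w = pp e then 2 else 0))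
                  else (if w = pp e then 1 else 0) + (if w = qq e then 1 else 0))"
  have GL: "(\<Sum>\<Psi>\<in>PiE V (\<lambda>_. {..<K}). cis (\<Sum>w\<in>V. ang K (\<Psi> w) * of_int (- (2 * r w))) *
            (\<Prod>e\<in>E. \<Sum>y\<in>UNIV. cis (\<Sum>w\<in>V. ang K (\<Psi> w) * of_int (m e y w))))
        = of_nat (K ^ card V * card {Yc \<in> PiE E (\<lambda>_. UNIV). \<forall>w\<in>V. (\<Sum>e\<in>E. m e (Yc e) w) = 2 * r w})"
  proof (rule fourier_count[OF finV finE _ K])
    fix Yc w assume w: "w \<in> V"
    have "\<bar>\<Sum>e\<in>E. m e (Yc e) w\<bar> \<le> int (card E) * 2"
      by (rule abs_sum_le_card) (auto simp: m_def)
    then show "\<bar>(\<Sum>e\<in>E. m e (Yc e) w) - 2 * r w\<bar> < int K" using bnd[OF w] by linarith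
  qed simp
  have "(\<Sum>\<Psi>\<in>PiE V (\<lambda>_. {..<K}). cis (- (\<Sum>w\<in>V. 2 * of_int (r w) * ang K (\<Psi> w))) *
            (\<Prod>e\<in>E. Apart (c e) (ang K (\<Psi> (pp e))) (ang K (\<Psi> (qq e))))) =
        (\<Sum>\<Psi>\<in>PiE V (\<lambda>_. {..<K}). cis (\<Sum>w\<in>V. ang K (\<Psi> w) * of_int (- (2 * r w))) *
            (\<Prod>e\<in>E. \<Sum>y\<in>UNIV. cis (\<Sum>w\<in>V. ang K (\<Psi> w) * of_int (m e y w))))"
  proof (intro sum.cong refl arg_cong2[where f = "(*)"] prod.cong)
    fix \<Psi> :: "'a \<Rightarrow> nat"
    show "cis (- (\<Sum>w\<in>V. 2 * of_int (r w) * ang K (\<Psi> w))) = cis (\<Sum>w\<in>V. ang K (\<Psi> w) * of_int (- (2 * r w)))"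
      by (simp add: sum_negf[symmetric] algebra_simps)
  next
    fix \<Psi> :: "'a \<Rightarrow> nat" and e assume e: "e \<in> E"
    have p: "pp e \<in> V" and q: "qq e \<in> V" using inV[OF e] by auto
    have s1: "(\<Sum>w\<in>V. ang K (\<Psi> w) * of_int (m e True w)) = (if c e = 0 then 2 * ang K (\<Psi> (qq e)) else ang K (\<Psi> (pp e)) + ang K (\<Psi> (qq e)))"
      using sum_delta_int[OF finV p, of "\<lambda>w. ang K (\<Psi> w)"] sum_delta_int[OF finV q, of "\<lambda>w. ang K (\<Psi> w)"]
      by (simp add: m_def distrib_left sum.distrib)
    have s0: "(\<Sum>w\<in>V. ang K (\<Psi> w) * of_int (m e False w)) = (if c e = 0 then 2 * ang K (\<Psi> (pp e)) else ang K (\<Psi> (pp e)) + ang K (\<Psi> (qq e)))"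
      using sum_delta_int[OF finV p, of "\<lambda>w. ang K (\<Psi> w)"] sum_delta_int[OF finV q, of "\<lambda>w. ang K (\<Psi> w)"]
      by (simp add: m_def distrib_left sum.distrib)
    show "Apart (c e) (ang K (\<Psi> (pp e))) (ang K (\<Psi> (qq e))) = (\<Sum>y\<in>UNIV. cis (\<Sum>w\<in>V. ang K (\<Psi> w) * of_int (m e y w)))"
      unfolding UNIV_bool using s0 s1 by (simp add: Apart_def mult_ac)
  qed
  then show ?thesis unfolding GL by blast
qed

lemma phi_part:
  fixes V :: "'a set" and E :: "'a set set" and K :: nat
  assumes finV: "finite V" and finE: "finite E"
    and inV: "\<And>e. e \<in> E \<Longrightarrow> pp e \<in> V \<and> qq e \<in> V"
    and K: "K = 2 * L" "L > 0"
  shows "0 \<le> (\<Sum>\<Phi>\<in>PiE V (\<lambda>_. {..<K}). \<Prod>e\<in>E. beta (c e) (ang K (\<Phi> (pp e))) * beta (c e) (ang K (\<Phi> (qq e))))"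
proof -
  define endp where "endp = (\<lambda>x::'a set \<times> bool. if snd x then qq (fst x) else pp (fst x))"
  define G where "G = (\<lambda>w j. \<Prod>x\<in>{x. x \<in> E \<times> UNIV \<and> endp x = w}. beta (c (fst x)) (ang K j))"
  have img: "endp ` (E \<times> UNIV) \<subseteq> V" using inV unfolding endp_def by auto
  have finEB: "finite (E \<times> (UNIV :: bool set))" using finE by simp
  have eq: "(\<Prod>e\<in>E. beta (c e) (ang K (\<Phi> (pp e))) * beta (c e) (ang K (\<Phi> (qq e)))) = (\<Prod>w\<in>V. G w (\<Phi> w))"
    for \<Phi> :: "'a \<Rightarrow> nat"
  proof -
    have "(\<Prod>e\<in>E. beta (c e) (ang K (\<Phi> (pp e))) * beta (c e) (ang K (\<Phi> (qq e))))
        = (\<Prod>x\<in>E \<times> UNIV. beta (c (fst x)) (ang K (\<Phi> (endp x))))"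
      by (subst prod_ExB) (simp add: endp_def)
    also have "\<dots> = (\<Prod>w\<in>V. \<Prod>x\<in>{x. x \<in> E \<times> UNIV \<and> endp x = w}. beta (c (fst x)) (ang K (\<Phi> (endp x))))"
      by (rule prod.group[symmetric, OF finEB finV img])
    also have "\<dots> = (\<Prod>w\<in>V. G w (\<Phi> w))"
      unfolding G_def by (intro prod.cong refl) auto
    finally show ?thesis .
  qed
  have "(\<Sum>\<Phi>\<in>PiE V (\<lambda>_. {..<K}). \<Prod>w\<in>V. G w (\<Phi> w)) = (\<Prod>w\<in>V. \<Sum>j<K. G w j)"
    by (rule prod_sum_PiE[symmetric]) (use finV in auto)
  moreover have "0 \<le> (\<Prod>w\<in>V. \<Sum>j<K. G w j)"
  proof (rule prod_nonneg)
    fix w assume "w \<in> V"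
    have "finite {x. x \<in> E \<times> (UNIV::bool set) \<and> endp x = w}" using finEB by simp
    then show "0 \<le> (\<Sum>j<K. G w j)" unfolding G_def by (rule beta_sum_nonneg[OF K])
  qed
  ultimately show ?thesis using eq by simp
qed

lemma Wc_nonneg:
  fixes V :: "'a set" and E :: "'a set set" and r :: "'a \<Rightarrow> int" and K :: nat
  assumes finV: "finite V" and finE: "finite E"
    and inV: "\<And>e. e \<in> E \<Longrightarrow> pp e \<in> V \<and> qq e \<in> V"
    and K: "K = 2 * L" "L > 0" and bnd: "\<And>w. w \<in> V \<Longrightarrow> 4 * int (card E) + 2 * \<bar>r w\<bar> < int K"
  shows "0 \<le> Re (Wc K V E pp qq r c)"
proof -
  define A where "A = (\<lambda>\<Psi>. cis (- (\<Sum>w\<in>V. 2 * of_int (r w) * ang K (\<Psi> w))) *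
            (\<Prod>e\<in>E. Apart (c e) (ang K (\<Psi> (pp e))) (ang K (\<Psi> (qq e)))))"
  define B where "B = (\<lambda>\<Phi>. \<Prod>e\<in>E. beta (c e) (ang K (\<Phi> (pp e))) * beta (c e) (ang K (\<Phi> (qq e))))"
  have "Wc K V E pp qq r c = (\<Sum>\<Psi>\<in>PiE V (\<lambda>_. {..<K}). \<Sum>\<Phi>\<in>PiE V (\<lambda>_. {..<K}). A \<Psi> * of_real (B \<Phi>))"
    unfolding Wc_def sum_split A_def B_def
    by (simp add: psi_def phi_def Tm_def prod.distrib of_real_prod mult_ac)
  also have "\<dots> = (\<Sum>\<Psi>\<in>PiE V (\<lambda>_. {..<K}). A \<Psi>) * of_real (\<Sum>\<Phi>\<in>PiE V (\<lambda>_. {..<K}). B \<Phi>)"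
    by (simp add: sum_distrib_left sum_distrib_right of_real_sum) (rule sum.swap)
  finally have W: "Wc K V E pp qq r c = \<dots>" .
  have Kpos: "K > 0" using K by simp
  obtain n where n: "(\<Sum>\<Psi>\<in>PiE V (\<lambda>_. {..<K}). A \<Psi>) = of_nat n"
    using psi_part[where V=V and E=E and pp=pp and qq=qq and K=K and r=r and c=c, OF finV finE inV Kpos bnd]
    unfolding A_def by blast
  have "0 \<le> (\<Sum>\<Phi>\<in>PiE V (\<lambda>_. {..<K}). B \<Phi>)" unfolding B_def by (rule phi_part[OF finV finE inV K])
  then show ?thesis unfolding W n by simp
qed

theorem theorem1p7:
  fixes V :: "'a set" and E :: "'a set set" and r :: "'a \<Rightarrow> int"
    and EH :: "('a \<times> bool) set set"
  assumes "simple_graph V E"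
    and "is_two_cover E EH"
  shows "eps (V \<times> UNIV) (double_edges E) (lift_vec r) \<ge> eps (V \<times> UNIV) EH (lift_vec r)"
proof -
  have finV: "finite V" and Eprop: "\<forall>e\<in>E. \<exists>u v. u \<in> V \<and> v \<in> V \<and> u \<noteq> v \<and> e = {u, v}"
    using assms(1) unfolding simple_graph_def by auto
  obtain s where s: "EH = cover_edges E s" using assms(2) unfolding is_two_cover_def by blast
  have "E \<subseteq> Pow V" using Eprop by auto
  then have finE: "finite E" using finV by (meson finite_Pow_iff finite_subset)
  from Eprop have "\<forall>e\<in>E. \<exists>u. \<exists>v. u \<in> V \<and> v \<in> V \<and> u \<noteq> v \<and> {u, v} = e" by metis
  then obtain pp where "\<forall>e\<in>E. \<exists>v. pp e \<in> V \<and> v \<in> V \<and> pp e \<noteq> v \<and> {pp e, v} = e" by metis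
  then obtain qq where pq: "\<forall>e\<in>E. pp e \<in> V \<and> qq e \<in> V \<and> pp e \<noteq> qq e \<and> {pp e, qq e} = e" by metis
  have ppq: "\<And>e. e \<in> E \<Longrightarrow> {pp e, qq e} = e \<and> pp e \<noteq> qq e" using pq by auto
  have inV: "\<And>e. e \<in> E \<Longrightarrow> pp e \<in> V \<and> qq e \<in> V" using pq by auto
  define B where "B = (\<Sum>w\<in>V. nat \<bar>r w\<bar>)"
  define L where "L = 4 * card E + 2 * B + 1"
  define K where "K = 2 * L"
  have K2: "K = 2 * L" "L > 0" unfolding K_def L_def by auto
  have Kpos: "K > 0" using K2 by simp
  have bnd: "4 * int (card E) + 2 * \<bar>r w\<bar> < int K" if w: "w \<in> V" for w
  proof -
    have "nat \<bar>r w\<bar> \<le> B" unfolding B_def by (rule member_le_sum) (use w finV in auto)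
    then have "\<bar>r w\<bar> \<le> int B" by linarith
    then show ?thesis unfolding K_def L_def by simp
  qed
  let ?N = "K ^ card (V \<times> (UNIV::bool set))"
  let ?P = "PiE E (\<lambda>_. {0,1,2::nat})"
  have Fs: "of_nat (?N * eps (V \<times> UNIV) (cover_edges E s) (lift_vec r)) =
     (\<Sum>c\<in>?P. of_real (\<Prod>e\<in>E. sg s e (c e)) * Wc K V E pp qq r c)"
    by (rule main_formula[OF finV finE ppq inV Kpos bnd])
  have Fd: "of_nat (?N * eps (V \<times> UNIV) (cover_edges E (\<lambda>_. False)) (lift_vec r)) =
     (\<Sum>c\<in>?P. of_real (\<Prod>e\<in>E. sg (\<lambda>_. False) e (c e)) * Wc K V E pp qq r c)"
    by (rule main_formula[OF finV finE ppq inV Kpos bnd])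
  have sg1: "(\<Prod>e\<in>E. sg (\<lambda>_. False) e (c e)) = 1" for c by (simp add: sg_def)
  have Wn: "0 \<le> Re (Wc K V E pp qq r c)" for c by (rule Wc_nonneg[OF finV finE inV K2 bnd])
  have le: "(\<Prod>e\<in>E. sg s e (c e)) * Re (Wc K V E pp qq r c) \<le> Re (Wc K V E pp qq r c)" for c
  proof -
    have "\<bar>\<Prod>e\<in>E. sg s e (c e)\<bar> = (\<Prod>e\<in>E. \<bar>sg s e (c e)\<bar>)" by (rule abs_prod)
    also have "\<dots> = 1" by (rule prod.neutral) (simp add: sg_def)
    finally have a1: "(\<Prod>e\<in>E. sg s e (c e)) \<le> 1" by linarith
    show ?thesis using mult_right_mono[OF a1 Wn[of c]] by simp
  qed
  have "real (?N * eps (V \<times> UNIV) (cover_edges E s) (lift_vec r)) =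
        Re (of_nat (?N * eps (V \<times> UNIV) (cover_edges E s) (lift_vec r)))" by simp
  also have "\<dots> = (\<Sum>c\<in>?P. (\<Prod>e\<in>E. sg s e (c e)) * Re (Wc K V E pp qq r c))"
    unfolding Fs by (simp del: of_real_prod)
  also have "\<dots> \<le> (\<Sum>c\<in>?P. Re (Wc K V E pp qq r c))" by (rule sum_mono) (rule le)
  also have "\<dots> = Re (of_nat (?N * eps (V \<times> UNIV) (cover_edges E (\<lambda>_. False)) (lift_vec r)))"
    unfolding Fd sg1 by simp
  also have "\<dots> = real (?N * eps (V \<times> UNIV) (cover_edges E (\<lambda>_. False)) (lift_vec r))" by simp
  finally have "?N * eps (V \<times> UNIV) (cover_edges E s) (lift_vec r) \<le> ?N * eps (V \<times> UNIV) (cover_edges E (\<lambda>_. False)) (lift_vec r)"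
    by linarith
  then have "eps (V \<times> UNIV) (cover_edges E s) (lift_vec r) \<le> eps (V \<times> UNIV) (cover_edges E (\<lambda>_. False)) (lift_vec r)"
    using Kpos by simp
  then show ?thesis unfolding s double_edges_def .
qed

end
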